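(* Let $Z$ be a compact, arcwise connected, approximately self-similar metric space with a $\kappa$-approximation $\{G_k\}_{k\in\mathbb N}$. For $d_0>0$ let $\mathcal F_0$ be the family of curves $\gamma\subset Z$ with $\mathrm{diam}(\gamma)\ge d_0$. Then, for $d_0$ sufficiently small (compared to $\mathrm{diam}Z$ and to the self-similarity constant $L_0$), for every $p\ge1$ there is a constant $C>0$ such that, writing $M_k=\mathrm{Mod}_p(\mathcal F_0,G_k)$, one has $M_{k+\ell}\le C\,M_k\,M_\ell$ for all $k,\ell\in\mathbb N$. Moreover, when $p$ ranges over a compact subset of $[1,\infty)$, $C$ may be chosen independent of $p$.
   Context: A compact metric space $(Z,d)$ is approximately self-similar if there is $L_0\ge1$ such that for every ball $B(z,r)\subset Z$ with $0<r\le\mathrm{diam}Z$ there is an open subset $U\subset Z$ which is $L_0$-bi-Lipschitz homeomorphic to the rescaled ball $(B(z,r),\frac1r d)$. Combinatorial modulus: for a compact metric space $Z$, $\kappa\ge1$, $k\in\mathbb N$, a finite graph $G_k$ is a $\kappa$-approximation of $Z$ on scale $k$ if it is the incidence graph of a finite covering of $Z$ (vertices identified with covering sets; distinct vertices adjacent iff they intersect) such that each vertex $v$ has $z_v$ with $B(z_v,\kappa^{-1}2^{-k})\subset v\subset B(z_v,\kappa2^{-k})$ and the balls $B(z_v,\kappa^{-1}2^{-k})$ are pairwise disjoint for distinct vertices; $\{G_k\}$ is a $\kappa$-approximation if each $G_k$ is one on scale $k$. For $\rho:G_k^0\to\mathbb R_+$, $L_\rho(\gamma)=\sum_{v\cap\gamma\ne\emptyset}\rho(v)$,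 $M_p(\rho)=\sum_v\rho(v)^p$; $\mathrm{Mod}_p(\mathcal F,G_k)=\inf M_p(\rho)$ over $\rho$ with $L_\rho(\gamma)\ge1$ for all $\gamma\in\mathcal F$. *)

theory Defs
  imports "HOL-Analysis.Analysis"
begin

definition zball :: "'a::metric_space set \<Rightarrow> 'a \<Rightarrow> real \<Rightarrow> 'a set" where
  "zball Z z r = ball z r \<inter> Z"

definition arcwise_connected :: "'a::metric_space set \<Rightarrow> bool" where
  "arcwise_connected Z \<longleftrightarrow>
     (\<forall>x\<in>Z. \<forall>y\<in>Z. x \<noteq> y \<longrightarrow>
        (\<exists>g. arc g \<and> path_image g \<subseteq> Z \<and> pathstart g = x \<and> pathfinish g = y))"

definition approx_self_similar :: "'a::metric_space set \<Rightarrow> real \<Rightarrow> bool" where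
  "approx_self_similar Z L0 \<longleftrightarrow> L0 \<ge> 1 \<and>
     (\<forall>z\<in>Z. \<forall>r. 0 < r \<and> r \<le> diameter Z \<longrightarrow>
        (\<exists>U f. openin (top_of_set Z) U \<and> U \<subseteq> Z \<and>
           bij_betw f (zball Z z r) U \<and>
           (\<forall>x\<in>zball Z z r. \<forall>y\<in>zball Z z r.
              dist x y / r / L0 \<le> dist (f x) (f y) \<and>
              dist (f x) (f y) \<le> L0 * (dist x y / r))))"

text \<open>The graph G_k is the incidence graph of the
  finite covering V (vertices = covering sets; adjacency = nonempty intersection), hence it is
  determined by V, and we represent it by V.\<close>
definition kappa_approx_scale :: "'a::metric_space set \<Rightarrow> real \<Rightarrow> nat \<Rightarrow> 'a set set \<Rightarrow> bool" where
  "kappa_approx_scale Z \<kappa> k V \<longleftrightarrow>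
     finite V \<and> (\<forall>v\<in>V. v \<subseteq> Z) \<and> \<Union>V = Z \<and>
     (\<exists>c. (\<forall>v\<in>V. c v \<in> Z \<and>
              zball Z (c v) (2 powr (- real k) / \<kappa>) \<subseteq> v \<and>
              v \<subseteq> zball Z (c v) (\<kappa> * 2 powr (- real k))) \<and>
          (\<forall>v\<in>V. \<forall>w\<in>V. v \<noteq> w \<longrightarrow>
              zball Z (c v) (2 powr (- real k) / \<kappa>) \<inter> zball Z (c w) (2 powr (- real k) / \<kappa>) = {}))"

definition kappa_approx :: "'a::metric_space set \<Rightarrow> real \<Rightarrow> (nat \<Rightarrow> 'a set set) \<Rightarrow> bool" where
  "kappa_approx Z \<kappa> G \<longleftrightarrow> \<kappa> \<ge> 1 \<and> (\<forall>k. kappa_approx_scale Z \<kappa> k (G k))"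

definition rho_length :: "'a set set \<Rightarrow> ('a set \<Rightarrow> real) \<Rightarrow> 'a set \<Rightarrow> real" where
  "rho_length V \<rho> \<gamma> = (\<Sum>v\<in>{v\<in>V. v \<inter> \<gamma> \<noteq> {}}. \<rho> v)"

definition rho_mass :: "real \<Rightarrow> 'a set set \<Rightarrow> ('a set \<Rightarrow> real) \<Rightarrow> real" where
  "rho_mass p V \<rho> = (\<Sum>v\<in>V. \<rho> v powr p)"

definition comb_mod :: "real \<Rightarrow> 'a set set \<Rightarrow> 'a set set \<Rightarrow> real" where
  "comb_mod p F V = Inf {rho_mass p V \<rho> | \<rho>. (\<forall>v\<in>V. \<rho> v \<ge> 0) \<and>
                                          (\<forall>\<gamma>\<in>F. rho_length V \<rho> \<gamma> \<ge> 1)}"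

definition curves_diam_ge :: "'a::metric_space set \<Rightarrow> real \<Rightarrow> 'a set set" where
  "curves_diam_ge Z d0 = {path_image g | g. path g \<and> path_image g \<subseteq> Z \<and> diameter (path_image g) \<ge> d0}"

end

theory Submission
  imports Defs
begin



lemma ccl:
  fixes Z :: "'a::metric_space set"
  assumes "compact Z" "e > 0"
  shows "\<exists>N. \<forall>S. S \<subseteq> Z \<longrightarrow> (\<forall>y\<in>S. \<forall>y'\<in>S. y \<noteq> y' \<longrightarrow> e \<le> dist y y') \<longrightarrow> card S \<le> N"
proof -
  have "Z \<subseteq> (\<Union>x\<in>Z. ball x (e/2))" using assms(2) by auto
  then obtain K where K: "K \<subseteq> Z" "finite K" "Z \<subseteq> (\<Union>x\<in>K. ball x (e/2))"
    using compactE_image[OF assms(1), of Z "\<lambda>x. ball x (e/2)"] by blast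
  show ?thesis
  proof (intro exI allI impI)
    fix S assume SZ: "S \<subseteq> Z" and sep: "\<forall>y\<in>S. \<forall>y'\<in>S. y \<noteq> y' \<longrightarrow> e \<le> dist y y'"
    have "\<forall>y\<in>S. \<exists>x\<in>K. y \<in> ball x (e/2)" using SZ K(3) by blast
    then obtain \<phi> where \<phi>: "\<forall>y\<in>S. \<phi> y \<in> K \<and> y \<in> ball (\<phi> y) (e/2)" by metis
    have "inj_on \<phi> S"
    proof (rule inj_onI)
      fix y y' assume "y \<in> S" "y' \<in> S" "\<phi> y = \<phi> y'"
      then have "dist y (\<phi> y) < e/2" "dist y' (\<phi> y) < e/2" using \<phi> by (auto simp: dist_commute)
      then have "dist y y' < e" using dist_triangle_half_l[of y "\<phi> y" e y'] by (auto simp: dist_commute)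
      then show "y = y'" using sep \<open>y \<in> S\<close> \<open>y' \<in> S\<close> by force
    qed
    then show "card S \<le> card K" using card_inj_on_le[of \<phi> S K] \<phi> K(2) by blast
  qed
qed

lemma powsum:
  fixes x :: "'b \<Rightarrow> real"
  assumes "finite I" "\<forall>i\<in>I. x i \<ge> 0" "p \<ge> 1"
  shows "(\<Sum>i\<in>I. x i) powr p \<le> real (card I) powr p * (\<Sum>i\<in>I. x i powr p)"
proof (cases "I = {}")
  case True then show ?thesis by simp
next
  case False
  define m where "m = Max (x ` I)"
  have mI: "m \<in> x ` I" unfolding m_def using assms(1) False by simp
  have le: "\<forall>i\<in>I. x i \<le> m" unfolding m_def using assms(1) by simp
  have m0: "m \<ge> 0" using mI assms(2) by auto
  have "(\<Sum>i\<in>I. x i) \<le> (\<Sum>i\<in>I. m)" using le by (intro sum_mono) auto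
  also have "\<dots> = real (card I) * m" by simp
  finally have s: "(\<Sum>i\<in>I. x i) \<le> real (card I) * m" .
  have "(\<Sum>i\<in>I. x i) powr p \<le> (real (card I) * m) powr p"
    using s assms by (intro powr_mono2) (auto intro: sum_nonneg)
  also have "\<dots> = real (card I) powr p * m powr p" using m0 by (simp add: powr_mult)
  also have "m powr p \<le> (\<Sum>i\<in>I. x i powr p)"
  proof -
    obtain j where j: "j \<in> I" "m = x j" using mI by auto
    show ?thesis using j assms(1) by (auto intro!: member_le_sum)
  qed
  then have "real (card I) powr p * m powr p \<le> real (card I) powr p * (\<Sum>i\<in>I. x i powr p)"
    by (intro mult_left_mono) auto
  finally show ?thesis .
qed

lemma inf_mult:
  fixes S :: "real set"
  assumes "S \<noteq> {}" "\<forall>s\<in>S. s \<ge> 0" "\<forall>s\<in>S. x \<le> c * s" "c \<ge> 0"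
  shows "x \<le> c * Inf S"
proof (cases "c = 0")
  case True
  then show ?thesis using assms by auto
next
  case False
  then have "x / c \<le> Inf S" using assms by (intro cInf_greatest) (auto simp: field_simps)
  then show ?thesis using False assms(4) by (simp add: field_simps)
qed

lemma sum_union_le:
  fixes h :: "'b \<Rightarrow> real"
  assumes "finite W" "\<forall>w\<in>W. finite (S w)" "\<forall>w\<in>W. \<forall>u\<in>S w. h u \<ge> 0"
  shows "sum h (\<Union>w\<in>W. S w) \<le> (\<Sum>w\<in>W. sum h (S w))"
  using assms
proof (induction W rule: finite_induct)
  case empty then show ?case by simp
next
  case (insert a W)
  have "sum h (\<Union>w\<in>insert a W. S w) = sum h (S a \<union> (\<Union>w\<in>W. S w))" by simp
  also have "\<dots> \<le> sum h (S a) + sum h (\<Union>w\<in>W. S w)"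
    using insert by (subst sum_Un) (auto intro!: sum_nonneg)
  also have "\<dots> \<le> sum h (S a) + (\<Sum>w\<in>W. sum h (S w))" using insert by auto
  finally show ?case using insert by simp
qed




lemma ssl:
  fixes Z :: "'a::metric_space set"
  assumes Zc: "compact Z" and ss: "approx_self_similar Z L0" and sg: "\<sigma> > 0"
  shows "\<exists>N. \<forall>x\<in>Z. \<forall>t>0. \<forall>S. S \<subseteq> Z \<inter> ball x (\<sigma>*t) \<longrightarrow>
            (\<forall>y\<in>S. \<forall>y'\<in>S. y \<noteq> y' \<longrightarrow> t \<le> dist y y') \<longrightarrow> card S \<le> N"
proof -
  have L1: "L0 \<ge> 1" using ss unfolding approx_self_similar_def by auto
  define D where "D = diameter Z"
  obtain N1 where N1: "\<forall>S. S \<subseteq> Z \<longrightarrow> (\<forall>y\<in>S. \<forall>y'\<in>S. y \<noteq> y' \<longrightarrow> 1/(\<sigma>*L0) \<le> dist y y') \<longrightarrow> card S \<le> N1"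
    using ccl[OF Zc, of "1/(\<sigma>*L0)"] sg L1 by auto
  obtain N2 where N2: "D > 0 \<Longrightarrow> \<forall>S. S \<subseteq> Z \<longrightarrow> (\<forall>y\<in>S. \<forall>y'\<in>S. y \<noteq> y' \<longrightarrow> D/\<sigma> \<le> dist y y') \<longrightarrow> card S \<le> N2"
    using ccl[OF Zc, of "D/\<sigma>"] sg by (cases "D > 0") auto
  have bZ: "bounded Z" using Zc compact_imp_bounded by auto
  show ?thesis
  proof (intro exI ballI allI impI)
    fix x t S assume xZ: "x \<in> Z" and t: "t > 0" and SZ: "S \<subseteq> Z \<inter> ball x (\<sigma>*t)"
      and sep: "\<forall>y\<in>S. \<forall>y'\<in>S. y \<noteq> y' \<longrightarrow> t \<le> dist y y'"
    show "card S \<le> max N1 (max N2 1)"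
    proof (cases "\<sigma>*t \<le> D")
      case True
      have r0: "0 < \<sigma>*t" using sg t by auto
      obtain U f where U: "U \<subseteq> Z" "bij_betw f (zball Z x (\<sigma>*t)) U"
        and lip: "\<forall>y\<in>zball Z x (\<sigma>*t). \<forall>y'\<in>zball Z x (\<sigma>*t).
              dist y y' / (\<sigma>*t) / L0 \<le> dist (f y) (f y')"
        using ss[unfolded approx_self_similar_def, THEN conjunct2, rule_format, OF xZ, of "\<sigma>*t"] r0 True
        unfolding D_def by blast
      have Sb: "S \<subseteq> zball Z x (\<sigma>*t)" using SZ unfolding zball_def by auto
      have inj: "inj_on f S" using U(2) Sb unfolding bij_betw_def by (auto intro: inj_on_subset)
      have fS: "f ` S \<subseteq> Z" using U Sb unfolding bij_betw_def by auto
      have "\<forall>z\<in>f`S. \<forall>z'\<in>f`S. z \<noteq> z' \<longrightarrow> 1/(\<sigma>*L0) \<le> dist z z'"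
      proof (intro ballI impI)
        fix z z' assume "z \<in> f`S" "z' \<in> f`S" "z \<noteq> z'"
        then obtain y y' where yy: "y \<in> S" "y' \<in> S" "z = f y" "z' = f y'" "y \<noteq> y'" by auto
        have tle: "t \<le> dist y y'" using sep yy by auto
        have "t / (\<sigma>*t) / L0 \<le> dist y y' / (\<sigma>*t) / L0"
          using tle r0 L1 by (intro divide_right_mono) auto
        also have "\<dots> \<le> dist z z'" using lip yy Sb by auto
        finally show "1/(\<sigma>*L0) \<le> dist z z'" using t by (simp add: field_simps)
      qed
      then have "card (f`S) \<le> N1" using N1 fS by auto
      then show ?thesis using card_image[OF inj] by auto
    next
      case False
      show ?thesis
      proof (cases "D > 0")
        case True
        have "\<forall>y\<in>S. \<forall>y'\<in>S. y \<noteq> y' \<longrightarrow> D/\<sigma> \<le> dist y y'"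
        proof (intro ballI impI)
          fix y y' assume "y \<in> S" "y' \<in> S" "y \<noteq> y'"
          then have "t \<le> dist y y'" using sep by auto
          moreover have "D/\<sigma> < t" using False sg by (simp add: divide_less_eq mult.commute)
          ultimately show "D/\<sigma> \<le> dist y y'" by linarith
        qed
        moreover have "S \<subseteq> Z" using SZ by auto
        ultimately show ?thesis using N2[OF True] by (meson le_max_iff_disj)
      next
        case nD: False
        have "\<forall>y\<in>S. \<forall>y'\<in>S. y = y'"
        proof (intro ballI, rule ccontr)
          fix y y' assume "y \<in> S" "y' \<in> S" "y \<noteq> y'"
          then have "t \<le> dist y y'" using sep by auto
          moreover have "dist y y' \<le> D" unfolding D_def
            using diameter_bounded_bound[OF bZ] \<open>y \<in> S\<close> \<open>y' \<in> S\<close> SZ by auto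
          ultimately show False using nD t by linarith
        qed
        then have "card S \<le> 1"
          by (cases "finite S") (auto simp: card_le_Suc0_iff_eq)
        then show ?thesis by auto
      qed
    qed
  qed
qed




lemma piece_fwd:
  fixes g :: "real \<Rightarrow> 'a::metric_space"
  assumes pg: "path g" and t01: "t0 \<le> t1" "0 \<le> t0" "t1 \<le> 1"
    and d0: "dist (g t0) c < a" and d1: "2*a \<le> dist (g t1) c" and a0: "a > 0"
  shows "\<exists>h. path h \<and> path_image h \<subseteq> path_image g \<and> (\<forall>y\<in>path_image h. dist y c \<le> 2*a) \<and>
            (\<exists>x\<in>path_image h. \<exists>y\<in>path_image h. a \<le> dist x y)"
proof -
  define \<phi> where "\<phi> u = dist (g u) c" for u
  have cg: "continuous_on {0..1} g" using pg unfolding path_def by auto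
  have c\<phi>: "continuous_on {0..1} \<phi>" unfolding \<phi>_def by (intro continuous_intros cg)
  have sub: "{x..y} \<subseteq> {0..1}" if "t0 \<le> x" "y \<le> t1" for x y using that t01 by auto
  have p0: "\<phi> t0 < a" "2*a \<le> \<phi> t1" using d0 d1 unfolding \<phi>_def by auto
  define T where "T = {u\<in>{t0..t1}. \<phi> u = 2*a}"
  have "\<exists>u. t0 \<le> u \<and> u \<le> t1 \<and> \<phi> u = 2*a"
    using p0 a0 t01 by (intro IVT') (auto intro: continuous_on_subset[OF c\<phi> sub])
  then have Tne: "T \<noteq> {}" unfolding T_def by auto
  have Tcl: "closed T" unfolding T_def
    by (intro continuous_closed_preimage_constant continuous_on_subset[OF c\<phi> sub]) auto
  have Tb: "bdd_below T" unfolding T_def by (auto intro: bdd_belowI[of _ t0])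
  define s where "s = Inf T"
  have sT: "s \<in> T" unfolding s_def using closed_contains_Inf[OF Tne Tb Tcl] .
  then have s: "t0 \<le> s" "s \<le> t1" "\<phi> s = 2*a" unfolding T_def by auto
  have below: "\<phi> u \<le> 2*a" if u: "t0 \<le> u" "u \<le> s" for u
  proof (rule ccontr)
    assume "\<not> \<phi> u \<le> 2*a"
    then have "\<exists>u'. t0 \<le> u' \<and> u' \<le> u \<and> \<phi> u' = 2*a"
      using p0 a0 u s by (intro IVT') (auto intro: continuous_on_subset[OF c\<phi> sub])
    then obtain u' where u': "t0 \<le> u'" "u' \<le> u" "\<phi> u' = 2*a" by auto
    then have "u' \<in> T" unfolding T_def using u s by auto
    then have "s \<le> u'" unfolding s_def using Tb by (simp add: cInf_lower)
    then have "u' = u" using u u' by auto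
    then show False using u' \<open>\<not> \<phi> u \<le> 2*a\<close> by auto
  qed
  define h where "h x = g (t0 + x*(s - t0))" for x
  have maps: "(\<lambda>x. t0 + x*(s - t0)) ` {0..1} \<subseteq> {t0..s}"
  proof
    fix y assume "y \<in> (\<lambda>x. t0 + x*(s - t0)) ` {0..1}"
    then obtain x where x: "x \<in> {0..1}" "y = t0 + x*(s - t0)" by auto
    have "x*(s-t0) \<le> 1*(s-t0)" using x s by (intro mult_right_mono) auto
    moreover have "0 \<le> x*(s-t0)" using x s by auto
    ultimately show "y \<in> {t0..s}" using x by auto
  qed
  have "path h" unfolding path_def h_def
    by (rule continuous_on_compose2[OF cg]) (use maps s t01 in \<open>auto intro!: continuous_intros\<close>)
  moreover have hsub: "path_image h \<subseteq> g ` {t0..s}" unfolding path_image_def h_def using maps by auto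
  moreover have "path_image h \<subseteq> path_image g" using hsub s t01 unfolding path_image_def by auto
  moreover have "\<forall>y\<in>path_image h. dist y c \<le> 2*a" using hsub below unfolding \<phi>_def by auto
  moreover have "h 0 \<in> path_image h" "h 1 \<in> path_image h" unfolding path_image_def by auto
  moreover have "a \<le> dist (h 0) (h 1)"
  proof -
    have "h 0 = g t0" "h 1 = g s" unfolding h_def by auto
    moreover have "dist (g s) c \<le> dist (g t0) (g s) + dist (g t0) c" using dist_triangle3[of "g s" c "g t0"]
      by (simp add: dist_commute)
    ultimately show ?thesis using s(3) d0 unfolding \<phi>_def by auto
  qed
  ultimately show ?thesis by blast
qed

lemma piece:
  fixes g :: "real \<Rightarrow> 'a::metric_space"
  assumes pg: "path g" and z0: "z0 \<in> path_image g" and dz: "dist z0 c < a"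
    and dg: "d0 \<le> diameter (path_image g)" and a0: "a > 0"
  shows "\<exists>h. path h \<and> path_image h \<subseteq> path_image g \<inter> ball c (3*a) \<and>
            (\<exists>x\<in>path_image h. \<exists>y\<in>path_image h. min d0 a \<le> dist x y)"
proof (cases "path_image g \<subseteq> ball c (3*a)")
  case True
  have "compact (path_image g)" using pg by (rule compact_path_image)
  moreover have "path_image g \<noteq> {}" using z0 by auto
  ultimately obtain x y where "x \<in> path_image g" "y \<in> path_image g" "dist x y = diameter (path_image g)"
    using diameter_compact_attained by blast
  then show ?thesis using True pg dg by (intro exI[of _ g]) force
next
  case False
  then obtain z1 where z1: "z1 \<in> path_image g" "3*a \<le> dist z1 c"
    by (auto simp: subset_eq dist_commute not_less)
  obtain t0 where t0: "t0 \<in> {0..1}" "g t0 = z0" using z0 unfolding path_image_def by auto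
  obtain t1 where t1: "t1 \<in> {0..1}" "g t1 = z1" using z1 unfolding path_image_def by auto
  have "\<exists>h. path h \<and> path_image h \<subseteq> path_image g \<and> (\<forall>y\<in>path_image h. dist y c \<le> 2*a) \<and>
            (\<exists>x\<in>path_image h. \<exists>y\<in>path_image h. a \<le> dist x y)"
  proof (cases "t0 \<le> t1")
    case True
    then show ?thesis using piece_fwd[OF pg True, of c a] t0 t1 dz z1 a0 by auto
  next
    case False
    have "\<exists>h. path h \<and> path_image h \<subseteq> path_image (reversepath g) \<and> (\<forall>y\<in>path_image h. dist y c \<le> 2*a) \<and>
            (\<exists>x\<in>path_image h. \<exists>y\<in>path_image h. a \<le> dist x y)"
      using piece_fwd[OF path_reversepath[THEN iffD2, OF pg], of "1 - t0" "1 - t1" c a] False t0 t1 dz z1 a0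
      by (auto simp: reversepath_def)
    then show ?thesis by simp
  qed
  then obtain h where h: "path h" "path_image h \<subseteq> path_image g" "\<forall>y\<in>path_image h. dist y c \<le> 2*a"
     "\<exists>x\<in>path_image h. \<exists>y\<in>path_image h. a \<le> dist x y" by blast
  have "path_image h \<subseteq> ball c (3*a)" using h(3) a0 by (force simp: dist_commute)
  moreover have "\<exists>x\<in>path_image h. \<exists>y\<in>path_image h. min d0 a \<le> dist x y" using h(4) by force
  ultimately show ?thesis using h by blast
qed

lemma transfer:
  fixes h :: "real \<Rightarrow> 'a::metric_space" and f :: "'a \<Rightarrow> 'a"
  assumes ph: "path h" and hs: "path_image h \<subseteq> zball Z c r" and fZ: "f ` zball Z c r \<subseteq> Z"
    and r0: "r > 0" and L0: "L0 > 0"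
    and lip: "\<forall>x\<in>zball Z c r. \<forall>y\<in>zball Z c r. dist x y / r / L0 \<le> dist (f x) (f y) \<and>
                dist (f x) (f y) \<le> L0 * (dist x y / r)"
    and xy: "x \<in> path_image h" "y \<in> path_image h" and dd: "d0 \<le> dist x y / r / L0"
  shows "f ` path_image h \<in> curves_diam_ge Z d0"
proof -
  have cf: "continuous_on (zball Z c r) f"
    unfolding continuous_on_iff
  proof (intro ballI allI impI)
    fix x e assume x: "x \<in> zball Z c r" and e: "(0::real) < e"
    show "\<exists>d>0. \<forall>x'\<in>zball Z c r. dist x' x < d \<longrightarrow> dist (f x') (f x) < e"
    proof (intro exI[of _ "e*r/L0"] conjI ballI impI)
      show "0 < e*r/L0" using e r0 L0 by auto
      fix x' assume x': "x' \<in> zball Z c r" and d: "dist x' x < e*r/L0"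
      have "dist (f x') (f x) \<le> L0 * (dist x' x / r)" using lip x x' by auto
      also have "\<dots> < L0 * ((e*r/L0) / r)" using d r0 L0 by (intro mult_strict_left_mono divide_strict_right_mono) auto
      also have "\<dots> = e" using r0 L0 by auto
      finally show "dist (f x') (f x) < e" .
    qed
  qed
  have ch: "continuous_on {0..1} h" using ph unfolding path_def .
  have hs': "h ` {0..1} \<subseteq> zball Z c r" using hs unfolding path_image_def .
  have cfh: "continuous_on {0..1} (\<lambda>t. f (h t))"
    by (rule continuous_on_compose2[OF cf ch hs'])
  then have pfh: "path (f \<circ> h)" unfolding path_def o_def .
  have im: "path_image (f \<circ> h) = f ` path_image h" by (simp add: path_image_compose)
  have "bounded (f ` path_image h)" using compact_path_image[OF pfh] im compact_imp_bounded by metis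
  then have "dist (f x) (f y) \<le> diameter (f ` path_image h)"
    using xy by (intro diameter_bounded_bound) auto
  moreover have "dist x y / r / L0 \<le> dist (f x) (f y)" using lip xy hs by auto
  ultimately have "d0 \<le> diameter (path_image (f \<circ> h))" using dd im by auto
  moreover have "path_image (f \<circ> h) \<subseteq> Z" using im hs fZ by auto
  ultimately have "path_image (f \<circ> h) \<in> curves_diam_ge Z d0" unfolding curves_diam_ge_def using pfh by blast
  then show ?thesis using im by simp
qed




definition tt :: "nat \<Rightarrow> real" where "tt n = 2 powr (- real n)"

lemma tt_pos: "tt n > 0" unfolding tt_def by simp
lemma tt_add: "tt (a + b) = tt a * tt b" unfolding tt_def by (simp add: powr_add[symmetric])
lemma tt_le1: "tt n \<le> 1"
proof -
  have "2 powr (- real n) \<le> 2 powr 0" by (intro powr_mono) auto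
  then show ?thesis unfolding tt_def by simp
qed
lemma tt_mono: "a \<le> b \<Longrightarrow> tt b \<le> tt a" unfolding tt_def by simp

locale setting =
  fixes Z :: "'a::metric_space set" and L0 \<kappa> :: real and G :: "nat \<Rightarrow> 'a set set"
    and c :: "nat \<Rightarrow> 'a set \<Rightarrow> 'a"
  assumes Zc: "compact Z" and ss: "approx_self_similar Z L0" and k1: "\<kappa> \<ge> 1"
    and Gfin: "\<And>n. finite (G n)" and Gsub: "\<And>n v. v \<in> G n \<Longrightarrow> v \<subseteq> Z"
    and Gcov: "\<And>n. \<Union>(G n) = Z"
    and cZ: "\<And>n v. v \<in> G n \<Longrightarrow> c n v \<in> Z"
    and cin: "\<And>n v. v \<in> G n \<Longrightarrow> zball Z (c n v) (tt n / \<kappa>) \<subseteq> v"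
    and cout: "\<And>n v. v \<in> G n \<Longrightarrow> v \<subseteq> zball Z (c n v) (\<kappa> * tt n)"
    and cdis: "\<And>n v w. v \<in> G n \<Longrightarrow> w \<in> G n \<Longrightarrow> v \<noteq> w \<Longrightarrow>
                 zball Z (c n v) (tt n / \<kappa>) \<inter> zball Z (c n w) (tt n / \<kappa>) = {}"
begin

lemma L1: "L0 \<ge> 1" using ss unfolding approx_self_similar_def by auto

lemma c_in_v: "v \<in> G n \<Longrightarrow> c n v \<in> v"
  using cin[of v n] cZ[of v n] tt_pos[of n] k1 unfolding zball_def by auto

lemma sep_centers:
  assumes "v \<in> G n" "w \<in> G n" "v \<noteq> w"
  shows "tt n / \<kappa> \<le> dist (c n v) (c n w)"
proof (rule ccontr)
  assume "\<not> ?thesis"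
  then have "c n w \<in> zball Z (c n v) (tt n / \<kappa>) \<inter> zball Z (c n w) (tt n / \<kappa>)"
    using cZ[OF assms(2)] tt_pos[of n] k1 unfolding zball_def by auto
  then show False using cdis[OF assms] by auto
qed

lemma c_inj: "inj_on (c n) (G n)"
proof (rule inj_onI)
  fix v w assume "v \<in> G n" "w \<in> G n" "c n v = c n w"
  moreover have "tt n / \<kappa> > 0" using tt_pos[of n] k1 by auto
  ultimately show "v = w" using sep_centers[of v n w] by force
qed

lemma count:
  assumes "\<sigma> > 0"
  shows "\<exists>N. \<forall>n x W. x \<in> Z \<longrightarrow> W \<subseteq> G n \<longrightarrow> (\<forall>v\<in>W. dist x (c n v) < \<sigma> * tt n) \<longrightarrow> card W \<le> N"
proof -
  obtain N where N: "\<forall>x\<in>Z. \<forall>t>0. \<forall>S. S \<subseteq> Z \<inter> ball x ((\<sigma>*\<kappa>)*t) \<longrightarrow>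
            (\<forall>y\<in>S. \<forall>y'\<in>S. y \<noteq> y' \<longrightarrow> t \<le> dist y y') \<longrightarrow> card S \<le> N"
    using ssl[OF Zc ss, of "\<sigma>*\<kappa>"] assms k1 by auto
  show ?thesis
  proof (intro exI allI impI)
    fix n x W assume x: "x \<in> Z" and W: "W \<subseteq> G n" and d: "\<forall>v\<in>W. dist x (c n v) < \<sigma> * tt n"
    have t: "tt n / \<kappa> > 0" using tt_pos[of n] k1 by auto
    have eq: "(\<sigma>*\<kappa>) * (tt n / \<kappa>) = \<sigma> * tt n" using k1 by simp
    have "c n ` W \<subseteq> Z \<inter> ball x ((\<sigma>*\<kappa>) * (tt n / \<kappa>))"
      using W d cZ eq by (auto simp: mem_ball)
    moreover have "\<forall>y\<in>c n ` W. \<forall>y'\<in>c n ` W. y \<noteq> y' \<longrightarrow> tt n / \<kappa> \<le> dist y y'"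
    proof (intro ballI impI)
      fix y y' assume "y \<in> c n ` W" "y' \<in> c n ` W" "y \<noteq> y'"
      then obtain v w where "v \<in> W" "w \<in> W" "y = c n v" "y' = c n w" "v \<noteq> w" by auto
      then show "tt n / \<kappa> \<le> dist y y'" using sep_centers[of v n w] W by auto
    qed
    ultimately have "card (c n ` W) \<le> N"
      using N[THEN bspec, OF x, THEN spec, of "tt n / \<kappa>", THEN mp, OF t, THEN spec, of "c n ` W"]
      by (meson)
    moreover have "inj_on (c n) W" using inj_on_subset[OF c_inj W] .
    ultimately show "card W \<le> N" by (simp add: card_image)
  qed
qed

definition adm :: "real \<Rightarrow> nat \<Rightarrow> ('a set \<Rightarrow> real) \<Rightarrow> bool" where
  "adm d0 n \<rho> \<longleftrightarrow> (\<forall>v\<in>G n. \<rho> v \<ge> 0) \<and> (\<forall>\<gamma>\<in>curves_diam_ge Z d0. rho_length (G n) \<rho> \<gamma> \<ge> 1)"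

lemma construction:
  fixes a b :: nat and d0 p :: real and \<rho>1 \<rho>2 :: "'a set \<Rightarrow> real"
  assumes NA: "\<forall>x W. x\<in>Z \<longrightarrow> W \<subseteq> G a \<longrightarrow> (\<forall>v\<in>W. dist x (c a v) < (4*\<kappa>)*tt a) \<longrightarrow> card W \<le> NA"
    and NB: "\<forall>x W. x\<in>Z \<longrightarrow> W \<subseteq> G b \<longrightarrow> (\<forall>u\<in>W. dist x (c b u) < (L0+\<kappa>)*tt b) \<longrightarrow> card W \<le> NB"
    and NC: "\<forall>x W. x\<in>Z \<longrightarrow> W \<subseteq> G (a+b) \<longrightarrow> (\<forall>w\<in>W. dist x (c (a+b) w) < (6*\<kappa>*\<kappa>*L0+\<kappa>)*tt (a+b)) \<longrightarrow> card W \<le> NC"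
    and aD: "3*\<kappa>*tt a \<le> diameter Z" and aL: "3*\<kappa>*tt a*L0 \<le> 1"
    and d0: "0 < d0" "d0 \<le> 1/(3*L0)" and p: "p \<ge> 1"
    and r1: "adm d0 a \<rho>1" and r2: "adm d0 b \<rho>2"
  shows "\<exists>\<rho>. adm d0 (a+b) \<rho> \<and> rho_mass p (G (a+b)) \<rho> \<le>
           (real NA * real NB) powr p * real NC * rho_mass p (G a) \<rho>1 * rho_mass p (G b) \<rho>2"
proof -
  define r where "r = 3*\<kappa>*tt a"
  have r0: "r > 0" unfolding r_def using k1 tt_pos[of a] by auto
  have rD: "r \<le> diameter Z" using aD unfolding r_def .
  have L1': "L0 \<ge> 1" by (rule L1)
  have "\<forall>v\<in>G a. \<exists>f. f ` zball Z (c a v) r \<subseteq> Z \<and> inj_on f (zball Z (c a v) r) \<and>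
          (\<forall>x\<in>zball Z (c a v) r. \<forall>y\<in>zball Z (c a v) r.
              dist x y / r / L0 \<le> dist (f x) (f y) \<and> dist (f x) (f y) \<le> L0 * (dist x y / r))"
  proof
    fix v assume v: "v \<in> G a"
    obtain U f where "U \<subseteq> Z" "bij_betw f (zball Z (c a v) r) U"
      "\<forall>x\<in>zball Z (c a v) r. \<forall>y\<in>zball Z (c a v) r.
              dist x y / r / L0 \<le> dist (f x) (f y) \<and> dist (f x) (f y) \<le> L0 * (dist x y / r)"
      using ss[unfolded approx_self_similar_def, THEN conjunct2, rule_format, OF cZ[OF v], of r] r0 rD
      by blast
    then show "\<exists>f. f ` zball Z (c a v) r \<subseteq> Z \<and> inj_on f (zball Z (c a v) r) \<and>
          (\<forall>x\<in>zball Z (c a v) r. \<forall>y\<in>zball Z (c a v) r.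
              dist x y / r / L0 \<le> dist (f x) (f y) \<and> dist (f x) (f y) \<le> L0 * (dist x y / r))"
      unfolding bij_betw_def by blast
  qed
  then obtain fv where fv0: "\<forall>v\<in>G a. fv v ` zball Z (c a v) r \<subseteq> Z \<and> inj_on (fv v) (zball Z (c a v) r) \<and>
          (\<forall>x\<in>zball Z (c a v) r. \<forall>y\<in>zball Z (c a v) r.
              dist x y / r / L0 \<le> dist (fv v x) (fv v y) \<and> dist (fv v x) (fv v y) \<le> L0 * (dist x y / r))"
    by (rule bchoice[THEN exE]) blast
  have fv: "\<And>v. v \<in> G a \<Longrightarrow> fv v ` zball Z (c a v) r \<subseteq> Z"
    "\<And>v x y. v \<in> G a \<Longrightarrow> x\<in>zball Z (c a v) r \<Longrightarrow> y\<in>zball Z (c a v) r \<Longrightarrow>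
              dist x y / r / L0 \<le> dist (fv v x) (fv v y)"
    "\<And>v x y. v \<in> G a \<Longrightarrow> x\<in>zball Z (c a v) r \<Longrightarrow> y\<in>zball Z (c a v) r \<Longrightarrow>
              dist (fv v x) (fv v y) \<le> L0 * (dist x y / r)"
    "\<And>v. v \<in> G a \<Longrightarrow> \<forall>x\<in>zball Z (c a v) r. \<forall>y\<in>zball Z (c a v) r.
              dist x y / r / L0 \<le> dist (fv v x) (fv v y) \<and> dist (fv v x) (fv v y) \<le> L0 * (dist x y / r)"
    using fv0 by auto
  define BB where "BB v = zball Z (c a v) r" for v
  define S where "S v w = {u\<in>G b. u \<inter> fv v ` (w \<inter> BB v) \<noteq> {}}" for v w
  define Vw where "Vw w = {v\<in>G a. w \<inter> BB v \<noteq> {}}" for w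
  define \<rho> where "\<rho> w = (\<Sum>v\<in>Vw w. \<Sum>u\<in>S v w. \<rho>1 v * \<rho>2 u)" for w
  have r1n: "\<And>v. v \<in> G a \<Longrightarrow> \<rho>1 v \<ge> 0" using r1 unfolding adm_def by auto
  have r2n: "\<And>u. u \<in> G b \<Longrightarrow> \<rho>2 u \<ge> 0" using r2 unfolding adm_def by auto
  have finS: "finite (S v w)" for v w unfolding S_def using Gfin by auto
  have finV: "finite (Vw w)" for w unfolding Vw_def using Gfin by auto
  have ttab: "tt (a+b) = tt a * tt b" by (rule tt_add)
  have tta: "tt (a+b) \<le> tt a" by (rule tt_mono) auto
  have ttb: "tt (a+b) \<le> tt b" by (rule tt_mono) auto
  have in_w: "dist (c n w) y < \<kappa> * tt n" if "w \<in> G n" "y \<in> w" for n w y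
    using cout[OF that(1)] that(2) unfolding zball_def by (auto simp: mem_ball)
  have cardA: "card (Vw w) \<le> NA" if w: "w \<in> G (a+b)" for w
  proof -
    have x: "c (a+b) w \<in> Z" by (rule cZ[OF w])
    have "\<forall>v\<in>Vw w. dist (c (a+b) w) (c a v) < (4*\<kappa>)*tt a"
    proof
      fix v assume "v \<in> Vw w"
      then obtain y where y: "y \<in> w" "y \<in> BB v" unfolding Vw_def by auto
      have d1: "dist (c a v) y < 3*\<kappa>*tt a" using y(2) unfolding BB_def zball_def r_def by (auto simp: mem_ball)
      have "\<kappa> * tt (a+b) \<le> \<kappa> * tt a" using tta k1 by (intro mult_left_mono) auto
      then have d2: "dist (c (a+b) w) y < \<kappa> * tt a"
        using in_w[OF w y(1)] by linarith
      have "dist (c (a+b) w) (c a v) \<le> dist (c (a+b) w) y + dist (c a v) y" by (metis dist_commute dist_triangle)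
      then show "dist (c (a+b) w) (c a v) < (4*\<kappa>)*tt a" using d1 d2 by linarith
    qed
    moreover have "Vw w \<subseteq> G a" unfolding Vw_def by auto
    ultimately show ?thesis using NA[THEN spec[of _ "c (a+b) w"], THEN spec[of _ "Vw w"]] x by meson
  qed
  have cardB: "card (S v w) \<le> NB" if v: "v \<in> G a" and w: "w \<in> G (a+b)" for v w
  proof (cases "w \<inter> BB v = {}")
    case True then show ?thesis unfolding S_def by simp
  next
    case False
    then obtain y1 where y1: "y1 \<in> w" "y1 \<in> BB v" by auto
    have x: "fv v y1 \<in> Z" using fv(1)[OF v] y1(2) unfolding BB_def by auto
    have "\<forall>u\<in>S v w. dist (fv v y1) (c b u) < (L0+\<kappa>)*tt b"
    proof
      fix u assume "u \<in> S v w"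
      then obtain y where y: "y \<in> w" "y \<in> BB v" "fv v y \<in> u" and u: "u \<in> G b" unfolding S_def by auto
      have "dist y1 y \<le> dist (c (a+b) w) y1 + dist (c (a+b) w) y" by (metis dist_commute dist_triangle)
      then have dy: "dist y1 y < 2*\<kappa>*tt (a+b)" using in_w[OF w y1(1)] in_w[OF w y(1)] by linarith
      have "dist (fv v y1) (fv v y) \<le> L0 * (dist y1 y / r)" using fv(3)[OF v] y1 y unfolding BB_def by auto
      also have "\<dots> \<le> L0 * (2*\<kappa>*tt (a+b) / r)"
        using dy r0 L1' by (intro mult_left_mono divide_right_mono) auto
      also have "\<dots> = L0 * tt b * (2/3)" unfolding r_def ttab using k1 tt_pos[of a] by (simp add: field_simps)
      also have "\<dots> \<le> L0 * tt b" using L1' tt_pos[of b] by auto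
      finally have d1: "dist (fv v y1) (fv v y) \<le> L0 * tt b" .
      have d2: "dist (c b u) (fv v y) < \<kappa> * tt b" by (rule in_w[OF u y(3)])
      have "dist (fv v y1) (c b u) \<le> dist (fv v y1) (fv v y) + dist (c b u) (fv v y)"
        by (metis dist_commute dist_triangle)
      then show "dist (fv v y1) (c b u) < (L0+\<kappa>)*tt b" using d1 d2 by (simp add: algebra_simps)
    qed
    moreover have "S v w \<subseteq> G b" unfolding S_def by auto
    ultimately show ?thesis using NB[THEN spec[of _ "fv v y1"], THEN spec[of _ "S v w"]] x by meson
  qed
  have cardC: "card {w\<in>G (a+b). u \<in> S v w} \<le> NC" if v: "v \<in> G a" and u: "u \<in> G b" for v u
  proof (cases "{w\<in>G (a+b). u \<in> S v w} = {}")
    case True then show ?thesis by (simp only: card.empty)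
  next
    case False
    then obtain w0 y0 where w0: "w0 \<in> G (a+b)" "y0 \<in> w0" "y0 \<in> BB v" "fv v y0 \<in> u"
      unfolding S_def by blast
    have x: "y0 \<in> Z" using w0(3) unfolding BB_def zball_def by auto
    have "\<forall>w\<in>{w\<in>G (a+b). u \<in> S v w}. dist y0 (c (a+b) w) < (6*\<kappa>*\<kappa>*L0+\<kappa>)*tt (a+b)"
    proof
      fix w assume "w \<in> {w\<in>G (a+b). u \<in> S v w}"
      then obtain y where y: "y \<in> w" "y \<in> BB v" "fv v y \<in> u" and w: "w \<in> G (a+b)" unfolding S_def by auto
      have "dist (fv v y0) (fv v y) \<le> dist (c b u) (fv v y0) + dist (c b u) (fv v y)" by (metis dist_commute dist_triangle)
      then have df: "dist (fv v y0) (fv v y) < 2*\<kappa>*tt b" using in_w[OF u w0(4)] in_w[OF u y(3)] by linarith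
      have "dist y0 y / r / L0 \<le> dist (fv v y0) (fv v y)" using fv(2)[OF v] w0 y unfolding BB_def by auto
      then have "dist y0 y / r / L0 < 2*\<kappa>*tt b" using df by linarith
      then have "dist y0 y < 2*\<kappa>*tt b * r * L0" using r0 L1' by (simp add: field_simps)
      also have "\<dots> = 6*\<kappa>*\<kappa>*L0 * tt (a+b)" unfolding r_def ttab by (simp add: algebra_simps)
      finally have d1: "dist y0 y < 6*\<kappa>*\<kappa>*L0 * tt (a+b)" .
      have d2: "dist (c (a+b) w) y < \<kappa> * tt (a+b)" by (rule in_w[OF w y(1)])
      have "dist y0 (c (a+b) w) \<le> dist y0 y + dist (c (a+b) w) y" by (metis dist_commute dist_triangle)
      then show "dist y0 (c (a+b) w) < (6*\<kappa>*\<kappa>*L0+\<kappa>)*tt (a+b)" using d1 d2 by (simp add: algebra_simps)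
    qed
    moreover have "{w\<in>G (a+b). u \<in> S v w} \<subseteq> G (a+b)" by auto
    ultimately show ?thesis using NC[THEN spec[of _ y0], THEN spec[of _ "{w\<in>G (a+b). u \<in> S v w}"]] x by meson
  qed
  have SsubB: "S v w \<subseteq> G b" for v w unfolding S_def by auto
  have VsubA: "Vw w \<subseteq> G a" for w unfolding Vw_def by auto
  have Sempty: "S v w = {}" if "v \<notin> Vw w" "v \<in> G a" for v w
    using that unfolding Vw_def S_def by auto
  have r2S: "u \<in> S v w \<Longrightarrow> \<rho>2 u \<ge> 0" for u v w using r2n SsubB by blast
  have r1V: "v \<in> Vw w \<Longrightarrow> \<rho>1 v \<ge> 0" for v w using r1n VsubA by blast
  have rhon: "\<rho> w \<ge> 0" for w
    unfolding \<rho>_def using r1V r2S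
    by (intro sum_nonneg) (auto intro!: mult_nonneg_nonneg)
  define q where "q v u = \<rho>1 v powr p * \<rho>2 u powr p" for v u
  have qn: "q v u \<ge> 0" for v u unfolding q_def by auto
  have inner: "(\<Sum>u\<in>S v w. \<rho>1 v * \<rho>2 u) powr p \<le> real NB powr p * (\<Sum>u\<in>S v w. q v u)"
    if v: "v \<in> G a" and w: "w \<in> G (a+b)" for v w
  proof -
    have "(\<Sum>u\<in>S v w. \<rho>1 v * \<rho>2 u) powr p \<le> real (card (S v w)) powr p * (\<Sum>u\<in>S v w. (\<rho>1 v * \<rho>2 u) powr p)"
      using finS p r1n[OF v] r2S by (intro powsum) auto
    also have "(\<Sum>u\<in>S v w. (\<rho>1 v * \<rho>2 u) powr p) = (\<Sum>u\<in>S v w. q v u)"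
      unfolding q_def using r1n[OF v] r2S by (intro sum.cong) (auto simp: powr_mult)
    also have "real (card (S v w)) powr p * (\<Sum>u\<in>S v w. q v u) \<le> real NB powr p * (\<Sum>u\<in>S v w. q v u)"
      using cardB[OF v w] p by (intro mult_right_mono powr_mono2 sum_nonneg qn) auto
    finally show ?thesis .
  qed
  have pw: "\<rho> w powr p \<le> (real NA * real NB) powr p * (\<Sum>v\<in>Vw w. \<Sum>u\<in>S v w. q v u)"
    if w: "w \<in> G (a+b)" for w
  proof -
    have "\<rho> w powr p \<le> real (card (Vw w)) powr p * (\<Sum>v\<in>Vw w. (\<Sum>u\<in>S v w. \<rho>1 v * \<rho>2 u) powr p)"
      unfolding \<rho>_def using finV p r1V r2S
      by (intro powsum) (auto intro!: sum_nonneg mult_nonneg_nonneg)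
    also have "\<dots> \<le> real NA powr p * (\<Sum>v\<in>Vw w. real NB powr p * (\<Sum>u\<in>S v w. q v u))"
    proof (rule mult_mono)
      show "real (card (Vw w)) powr p \<le> real NA powr p" using cardA[OF w] p by (intro powr_mono2) auto
      show "(\<Sum>v\<in>Vw w. (\<Sum>u\<in>S v w. \<rho>1 v * \<rho>2 u) powr p) \<le> (\<Sum>v\<in>Vw w. real NB powr p * (\<Sum>u\<in>S v w. q v u))"
        using inner w VsubA by (intro sum_mono) blast
    qed (auto intro!: sum_nonneg)
    also have "\<dots> = (real NA * real NB) powr p * (\<Sum>v\<in>Vw w. \<Sum>u\<in>S v w. q v u)"
      by (simp add: powr_mult sum_distrib_left mult.assoc)
    finally show ?thesis .
  qed
  have e1: "(\<Sum>v\<in>Vw w. \<Sum>u\<in>S v w. q v u) = (\<Sum>v\<in>G a. \<Sum>u\<in>G b. if u \<in> S v w then q v u else 0)" for w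
  proof -
    have "(\<Sum>v\<in>Vw w. \<Sum>u\<in>S v w. q v u) = (\<Sum>v\<in>G a. \<Sum>u\<in>S v w. q v u)"
      using Gfin VsubA Sempty by (intro sum.mono_neutral_left) auto
    also have "\<dots> = (\<Sum>v\<in>G a. \<Sum>u\<in>G b. if u \<in> S v w then q v u else 0)"
    proof (rule sum.cong[OF refl])
      fix v
      have "S v w = G b \<inter> S v w" using SsubB by auto
      then show "(\<Sum>u\<in>S v w. q v u) = (\<Sum>u\<in>G b. if u \<in> S v w then q v u else 0)"
        using sum.inter_restrict[OF Gfin[of b], of "q v" "S v w"] by simp
    qed
    finally show ?thesis .
  qed
  have e2: "(\<Sum>w\<in>G (a+b). \<Sum>v\<in>Vw w. \<Sum>u\<in>S v w. q v u) =
      (\<Sum>v\<in>G a. \<Sum>u\<in>G b. q v u * real (card {w\<in>G (a+b). u \<in> S v w}))"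
  proof -
    have "(\<Sum>w\<in>G (a+b). \<Sum>v\<in>Vw w. \<Sum>u\<in>S v w. q v u) =
       (\<Sum>w\<in>G (a+b). \<Sum>v\<in>G a. \<Sum>u\<in>G b. if u \<in> S v w then q v u else 0)" by (simp only: e1)
    also have "\<dots> = (\<Sum>v\<in>G a. \<Sum>w\<in>G (a+b). \<Sum>u\<in>G b. if u \<in> S v w then q v u else 0)" by (rule sum.swap)
    also have "\<dots> = (\<Sum>v\<in>G a. \<Sum>u\<in>G b. \<Sum>w\<in>G (a+b). if u \<in> S v w then q v u else 0)"
      by (intro sum.cong[OF refl] sum.swap)
    also have "\<dots> = (\<Sum>v\<in>G a. \<Sum>u\<in>G b. q v u * real (card {w\<in>G (a+b). u \<in> S v w}))"
    proof (intro sum.cong[OF refl])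
      fix v u
      have "(\<Sum>w\<in>G (a+b). if u \<in> S v w then q v u else 0) = (\<Sum>w\<in>G (a+b) \<inter> {w. u \<in> S v w}. q v u)"
        using sum.inter_restrict[OF Gfin[of "a+b"], of "\<lambda>_. q v u" "{w. u \<in> S v w}"] by simp
      also have "\<dots> = q v u * real (card {w\<in>G (a+b). u \<in> S v w})"
        by (simp add: Int_def conj_commute)
      finally show "(\<Sum>w\<in>G (a+b). if u \<in> S v w then q v u else 0) = q v u * real (card {w\<in>G (a+b). u \<in> S v w})" .
    qed
    finally show ?thesis .
  qed
  have mass: "rho_mass p (G (a+b)) \<rho> \<le>
           (real NA * real NB) powr p * real NC * rho_mass p (G a) \<rho>1 * rho_mass p (G b) \<rho>2"
  proof -
    have "rho_mass p (G (a+b)) \<rho> \<le> (\<Sum>w\<in>G (a+b). (real NA * real NB) powr p * (\<Sum>v\<in>Vw w. \<Sum>u\<in>S v w. q v u))"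
      unfolding rho_mass_def using pw by (intro sum_mono) auto
    also have "\<dots> = (real NA * real NB) powr p * (\<Sum>v\<in>G a. \<Sum>u\<in>G b. q v u * real (card {w\<in>G (a+b). u \<in> S v w}))"
      by (simp add: sum_distrib_left[symmetric] e2)
    also have "\<dots> \<le> (real NA * real NB) powr p * (\<Sum>v\<in>G a. \<Sum>u\<in>G b. q v u * real NC)"
      using cardC qn by (intro mult_left_mono sum_mono mult_left_mono) auto
    also have "\<dots> = (real NA * real NB) powr p * real NC * rho_mass p (G a) \<rho>1 * rho_mass p (G b) \<rho>2"
    proof -
      have "(\<Sum>v\<in>G a. \<Sum>u\<in>G b. q v u * real NC) = real NC * (\<Sum>v\<in>G a. \<Sum>u\<in>G b. q v u)"
        by (simp add: sum_distrib_left mult.commute)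
      also have "(\<Sum>v\<in>G a. \<Sum>u\<in>G b. q v u) = rho_mass p (G a) \<rho>1 * rho_mass p (G b) \<rho>2"
        unfolding rho_mass_def q_def by (rule sum_product[symmetric])
      finally show ?thesis by (simp add: mult.assoc)
    qed
    finally show ?thesis .
  qed
  have admis: "rho_length (G (a+b)) \<rho> \<gamma> \<ge> 1" if \<gamma>F: "\<gamma> \<in> curves_diam_ge Z d0" for \<gamma>
  proof -
    obtain g where g: "\<gamma> = path_image g" "path g" "path_image g \<subseteq> Z" "d0 \<le> diameter (path_image g)"
      using \<gamma>F unfolding curves_diam_ge_def by blast
    define Wg where "Wg = {w\<in>G (a+b). w \<inter> \<gamma> \<noteq> {}}"
    define Vg where "Vg = {v\<in>G a. v \<inter> \<gamma> \<noteq> {}}"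
    define J where "J v = (\<Sum>w\<in>Wg. \<Sum>u\<in>S v w. \<rho>2 u)" for v
    have finW: "finite Wg" unfolding Wg_def using Gfin by auto
    have Jn: "J v \<ge> 0" for v unfolding J_def using r2S by (auto intro!: sum_nonneg)
    have rw: "\<rho> w = (\<Sum>v\<in>G a. \<rho>1 v * (\<Sum>u\<in>S v w. \<rho>2 u))" for w
    proof -
      have "\<rho> w = (\<Sum>v\<in>Vw w. \<rho>1 v * (\<Sum>u\<in>S v w. \<rho>2 u))" unfolding \<rho>_def by (simp add: sum_distrib_left)
      also have "\<dots> = (\<Sum>v\<in>G a. \<rho>1 v * (\<Sum>u\<in>S v w. \<rho>2 u))"
        using Gfin VsubA Sempty by (intro sum.mono_neutral_left) auto
      finally show ?thesis .
    qed
    have "rho_length (G (a+b)) \<rho> \<gamma> = (\<Sum>w\<in>Wg. \<rho> w)" unfolding rho_length_def Wg_def ..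
    also have "\<dots> = (\<Sum>v\<in>G a. \<rho>1 v * J v)"
      unfolding rw J_def by (simp add: sum_distrib_left sum.swap[of _ Wg])
    finally have lenq: "rho_length (G (a+b)) \<rho> \<gamma> = (\<Sum>v\<in>G a. \<rho>1 v * J v)" .
    have J1: "J v \<ge> 1" if v: "v \<in> Vg" for v
    proof -
      have vA: "v \<in> G a" using v unfolding Vg_def by auto
      obtain z0 where z0: "z0 \<in> v" "z0 \<in> path_image g" using v g(1) unfolding Vg_def by auto
      have dz: "dist z0 (c a v) < \<kappa> * tt a" using in_w[OF vA z0(1)] by (simp add: dist_commute)
      have ka: "\<kappa> * tt a > 0" using k1 tt_pos[of a] by auto
      obtain h x y where h: "path h" "path_image h \<subseteq> path_image g \<inter> ball (c a v) (3*(\<kappa> * tt a))"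
        and xy: "x \<in> path_image h" "y \<in> path_image h" "min d0 (\<kappa> * tt a) \<le> dist x y"
        using piece[OF g(2) z0(2) dz g(4) ka] by blast
      have hs: "path_image h \<subseteq> zball Z (c a v) r"
        using h(2) g(3) unfolding zball_def r_def by (auto simp: mult.assoc)
      have L0p: "L0 > 0" using L1' by auto
      have "d0 \<le> min d0 (\<kappa> * tt a) / r / L0"
      proof (cases "d0 \<le> \<kappa> * tt a")
        case True
        have "d0 * (r * L0) \<le> d0 * 1" using aL d0 unfolding r_def by (intro mult_left_mono) auto
        then show ?thesis using True r0 L0p by (simp add: field_simps)
      next
        case False
        have mm: "min d0 (\<kappa> * tt a) = \<kappa> * tt a" using False by auto
        have "\<kappa> * tt a / r / L0 = 1 / (3 * L0)" unfolding r_def using tt_pos[of a] k1 by (simp add: field_simps)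
        then show ?thesis using d0(2) by (simp only: mm)
      qed
      also have "\<dots> \<le> dist x y / r / L0" using xy(3) r0 L0p by (intro divide_right_mono) auto
      finally have dd: "d0 \<le> dist x y / r / L0" .
      define P where "P = fv v ` path_image h"
      have PF: "P \<in> curves_diam_ge Z d0" unfolding P_def
        by (rule transfer[OF h(1) hs fv(1)[OF vA] r0 L0p fv(4)[OF vA] xy(1) xy(2) dd])
      then have "rho_length (G b) \<rho>2 P \<ge> 1" using r2 unfolding adm_def by auto
      then have s1: "(\<Sum>u\<in>{u\<in>G b. u \<inter> P \<noteq> {}}. \<rho>2 u) \<ge> 1" unfolding rho_length_def .
      have sub: "{u\<in>G b. u \<inter> P \<noteq> {}} \<subseteq> (\<Union>w\<in>Wg. S v w)"
      proof
        fix u assume "u \<in> {u\<in>G b. u \<inter> P \<noteq> {}}"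
        then obtain y where u: "u \<in> G b" and y: "y \<in> path_image h" "fv v y \<in> u" unfolding P_def by auto
        have yZ: "y \<in> Z" using y(1) h(2) g(3) by auto
        then obtain w where w: "w \<in> G (a+b)" "y \<in> w" using Gcov[of "a+b"] by auto
        have "y \<in> \<gamma>" using y(1) h(2) g(1) by auto
        then have "w \<in> Wg" unfolding Wg_def using w by auto
        moreover have "y \<in> BB v" using y(1) hs unfolding BB_def by auto
        then have "u \<in> S v w" unfolding S_def using u y w by auto
        ultimately show "u \<in> (\<Union>w\<in>Wg. S v w)" by auto
      qed
      have "(\<Sum>u\<in>{u\<in>G b. u \<inter> P \<noteq> {}}. \<rho>2 u) \<le> (\<Sum>u\<in>(\<Union>w\<in>Wg. S v w). \<rho>2 u)"
        using sub finW finS r2S by (intro sum_mono2) auto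
      also have "\<dots> \<le> J v" unfolding J_def using finW finS r2S by (intro sum_union_le) auto
      finally show ?thesis using s1 by linarith
    qed
    have "1 \<le> rho_length (G a) \<rho>1 \<gamma>" using r1 \<gamma>F unfolding adm_def by auto
    also have "rho_length (G a) \<rho>1 \<gamma> = (\<Sum>v\<in>Vg. \<rho>1 v)" unfolding rho_length_def Vg_def ..
    also have "\<dots> \<le> (\<Sum>v\<in>Vg. \<rho>1 v * J v)"
    proof (rule sum_mono)
      fix v assume v: "v \<in> Vg"
      then have "\<rho>1 v \<ge> 0" using r1n unfolding Vg_def by auto
      then show "\<rho>1 v \<le> \<rho>1 v * J v" using J1[OF v] mult_left_mono[of 1 "J v" "\<rho>1 v"] by simp
    qed
    also have "\<dots> \<le> (\<Sum>v\<in>G a. \<rho>1 v * J v)"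
      using Gfin r1n Jn unfolding Vg_def by (intro sum_mono2) auto
    finally show ?thesis using lenq by simp
  qed
  have "adm d0 (a+b) \<rho>" unfolding adm_def using rhon admis by auto
  then show ?thesis using mass by blast
qed

end



lemma tt_small: "e > 0 \<Longrightarrow> \<exists>n. tt n < e"
proof -
  assume e: "e > 0"
  obtain n where n: "1/e < (2::real)^n" using real_arch_pow[of 2 "1/e"] by auto
  have "tt n = inverse (2^n)" unfolding tt_def by (simp add: powr_minus powr_realpow)
  also have "\<dots> < e" using n e by (simp add: field_simps)
  finally show ?thesis by blast
qed

context setting
begin

lemma mass_nonneg: "rho_mass p V \<rho> \<ge> 0" unfolding rho_mass_def by (auto intro: sum_nonneg)

lemma comb_eq: "comb_mod p (curves_diam_ge Z dd) (G n) = Inf {rho_mass p (G n) \<rho> | \<rho>. adm dd n \<rho>}"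
  unfolding comb_mod_def adm_def ..

lemma adm_one: "adm dd n (\<lambda>_. 1)"
  unfolding adm_def
proof (intro conjI ballI)
  fix \<gamma> assume "\<gamma> \<in> curves_diam_ge Z dd"
  then obtain g where g: "\<gamma> = path_image g" "path_image g \<subseteq> Z" unfolding curves_diam_ge_def by blast
  have "g 0 \<in> \<gamma>" using g unfolding path_image_def by auto
  then obtain v where v: "v \<in> G n" "g 0 \<in> v" using g Gcov[of n] by blast
  have "v \<in> {v\<in>G n. v \<inter> \<gamma> \<noteq> {}}" using v \<open>g 0 \<in> \<gamma>\<close> by auto
  then have "{v\<in>G n. v \<inter> \<gamma> \<noteq> {}} \<noteq> {}" by blast
  moreover have "finite {v\<in>G n. v \<inter> \<gamma> \<noteq> {}}" using Gfin by auto
  ultimately show "1 \<le> rho_length (G n) (\<lambda>_. 1) \<gamma>" unfolding rho_length_def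
    by (simp add: Suc_le_eq card_gt_0_iff)
qed auto

lemma mod_le: "adm dd n \<rho> \<Longrightarrow> comb_mod p (curves_diam_ge Z dd) (G n) \<le> rho_mass p (G n) \<rho>"
  unfolding comb_eq by (rule cInf_lower) (auto intro!: bdd_belowI[of _ 0] mass_nonneg)

lemma mod_ge:
  assumes "\<forall>\<rho>. adm dd n \<rho> \<longrightarrow> x \<le> K * rho_mass p (G n) \<rho>" "K \<ge> 0"
  shows "x \<le> K * comb_mod p (curves_diam_ge Z dd) (G n)"
  unfolding comb_eq using assms adm_one[of dd n]
  by (intro inf_mult) (auto intro: mass_nonneg)

lemma mod_nonneg: "comb_mod p (curves_diam_ge Z dd) (G n) \<ge> 0"
  using mod_ge[where x=0 and K=1 and dd=dd and n=n and p=p] mass_nonneg by auto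

lemma mod_upper: "comb_mod p (curves_diam_ge Z dd) (G n) \<le> real (card (G n))"
  using mod_le[OF adm_one, where dd=dd and n=n and p=p] unfolding rho_mass_def by simp

lemma mod_lower:
  assumes F: "curves_diam_ge Z dd \<noteq> {}" and p: "p \<ge> 1"
  shows "comb_mod p (curves_diam_ge Z dd) (G n) \<ge> (1 / real (card (G n))) powr p"
proof -
  obtain \<gamma> where \<gamma>: "\<gamma> \<in> curves_diam_ge Z dd" using F by auto
  have "\<forall>\<rho>. adm dd n \<rho> \<longrightarrow> (1 / real (card (G n))) powr p \<le> 1 * rho_mass p (G n) \<rho>"
  proof (intro allI impI)
    fix \<rho> assume a: "adm dd n \<rho>"
    define Vg where "Vg = {v\<in>G n. v \<inter> \<gamma> \<noteq> {}}"
    have s1: "(\<Sum>v\<in>Vg. \<rho> v) \<ge> 1" using a \<gamma> unfolding adm_def rho_length_def Vg_def by auto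
    have finV: "finite Vg" unfolding Vg_def using Gfin by auto
    have VG: "Vg \<subseteq> G n" unfolding Vg_def by auto
    have "\<exists>v\<in>Vg. \<rho> v \<ge> 1 / real (card (G n))"
    proof (rule ccontr)
      assume "\<not> ?thesis"
      then have lt: "\<forall>v\<in>Vg. \<rho> v < 1 / real (card (G n))" by auto
      have ne: "Vg \<noteq> {}" using s1 by auto
      have "(\<Sum>v\<in>Vg. \<rho> v) < (\<Sum>v\<in>Vg. 1 / real (card (G n)))"
        using lt finV ne by (intro sum_strict_mono) auto
      also have "\<dots> = real (card Vg) / real (card (G n))" by simp
      also have "\<dots> \<le> 1"
        using card_mono[OF Gfin VG] by (cases "card (G n) = 0") (auto simp: field_simps)
      finally show False using s1 by linarith
    qed
    then obtain v where v: "v \<in> Vg" "\<rho> v \<ge> 1 / real (card (G n))" by auto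
    have "(1 / real (card (G n))) powr p \<le> \<rho> v powr p" using v(2) p by (intro powr_mono2) auto
    also have "\<dots> \<le> rho_mass p (G n) \<rho>" unfolding rho_mass_def
      using v(1) VG Gfin by (intro member_le_sum) auto
    finally show "(1 / real (card (G n))) powr p \<le> 1 * rho_mass p (G n) \<rho>" by simp
  qed
  from mod_ge[OF this] show ?thesis by simp
qed

lemma mod_empty:
  assumes F: "curves_diam_ge Z dd = {}"
  shows "comb_mod p (curves_diam_ge Z dd) (G n) = 0"
proof -
  have "adm dd n (\<lambda>_. 0)" unfolding adm_def using F by auto
  from mod_le[OF this, where p=p] have "comb_mod p (curves_diam_ge Z dd) (G n) \<le> 0"
    unfolding rho_mass_def by simp
  then show ?thesis using mod_nonneg[where p=p and dd=dd and n=n] by linarith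
qed

lemma big:
  assumes dd: "0 < dd" "dd \<le> 1/(3*L0)" and p: "1 \<le> p" "p \<le> P"
    and NA: "\<forall>x W. x\<in>Z \<longrightarrow> W \<subseteq> G a \<longrightarrow> (\<forall>v\<in>W. dist x (c a v) < (4*\<kappa>)*tt a) \<longrightarrow> card W \<le> NA"
    and NB: "\<forall>x W. x\<in>Z \<longrightarrow> W \<subseteq> G b \<longrightarrow> (\<forall>u\<in>W. dist x (c b u) < (L0+\<kappa>)*tt b) \<longrightarrow> card W \<le> NB"
    and NC: "\<forall>x W. x\<in>Z \<longrightarrow> W \<subseteq> G (a+b) \<longrightarrow> (\<forall>w\<in>W. dist x (c (a+b) w) < (6*\<kappa>*\<kappa>*L0+\<kappa>)*tt (a+b)) \<longrightarrow> card W \<le> NC"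
    and aD: "3*\<kappa>*tt a \<le> diameter Z" and aL: "3*\<kappa>*tt a*L0 \<le> 1"
  shows "comb_mod p (curves_diam_ge Z dd) (G (a+b)) \<le>
     ((max 1 (real NA * real NB)) powr P * real NC) * comb_mod p (curves_diam_ge Z dd) (G a) * comb_mod p (curves_diam_ge Z dd) (G b)"
proof -
  define K where "K = (real NA * real NB) powr p * real NC"
  have K0: "K \<ge> 0" unfolding K_def by auto
  have step: "comb_mod p (curves_diam_ge Z dd) (G (a+b)) \<le> K * rho_mass p (G a) \<rho>1 * rho_mass p (G b) \<rho>2"
    if r1: "adm dd a \<rho>1" and r2: "adm dd b \<rho>2" for \<rho>1 \<rho>2
  proof -
    obtain \<rho> where "adm dd (a+b) \<rho>" "rho_mass p (G (a+b)) \<rho> \<le> K * rho_mass p (G a) \<rho>1 * rho_mass p (G b) \<rho>2"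
      using construction[OF NA NB NC aD aL dd(1) dd(2) p(1) r1 r2] unfolding K_def by blast
    then show ?thesis using mod_le[where p=p] by fastforce
  qed
  have step2: "comb_mod p (curves_diam_ge Z dd) (G (a+b)) \<le> (K * comb_mod p (curves_diam_ge Z dd) (G a)) * rho_mass p (G b) \<rho>2"
    if r2: "adm dd b \<rho>2" for \<rho>2
  proof -
    have "comb_mod p (curves_diam_ge Z dd) (G (a+b)) \<le> (K * rho_mass p (G b) \<rho>2) * comb_mod p (curves_diam_ge Z dd) (G a)"
      using step[OF _ r2] mult_nonneg_nonneg[OF K0 mass_nonneg] by (intro mod_ge) (auto simp: ac_simps)
    then show ?thesis by (simp add: ac_simps)
  qed
  have "comb_mod p (curves_diam_ge Z dd) (G (a+b)) \<le> (K * comb_mod p (curves_diam_ge Z dd) (G a)) * comb_mod p (curves_diam_ge Z dd) (G b)"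
    using step2 mult_nonneg_nonneg[OF K0 mod_nonneg]
    by (intro mod_ge[where n=b and K="K * comb_mod p (curves_diam_ge Z dd) (G a)"]) auto
  also have "\<dots> \<le> ((max 1 (real NA * real NB)) powr P * real NC) * comb_mod p (curves_diam_ge Z dd) (G a) * comb_mod p (curves_diam_ge Z dd) (G b)"
  proof -
    have "(real NA * real NB) powr p \<le> (max 1 (real NA * real NB)) powr p" using p by (intro powr_mono2) auto
    also have "\<dots> \<le> (max 1 (real NA * real NB)) powr P" using p by (intro powr_mono) auto
    finally have "K \<le> (max 1 (real NA * real NB)) powr P * real NC" unfolding K_def by (intro mult_right_mono) auto
    then show ?thesis using mod_nonneg by (intro mult_right_mono) auto
  qed
  finally show ?thesis .
qed

lemma key:
  assumes dd: "0 < dd" "dd \<le> 1/(3*L0)" and P: "P \<ge> 1"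
  shows "\<exists>C>0. \<forall>p. 1 \<le> p \<and> p \<le> P \<longrightarrow> (\<forall>k l. comb_mod p (curves_diam_ge Z dd) (G (k+l))
          \<le> C * comb_mod p (curves_diam_ge Z dd) (G k) * comb_mod p (curves_diam_ge Z dd) (G l))"
proof (cases "curves_diam_ge Z dd = {}")
  case True
  show ?thesis by (rule exI[of _ 1]) (simp add: mod_empty[OF True])
next
  case False
  then obtain \<gamma> where "\<gamma> \<in> curves_diam_ge Z dd" by auto
  then obtain g where g: "\<gamma> = path_image g" "path_image g \<subseteq> Z" "dd \<le> diameter (path_image g)"
    unfolding curves_diam_ge_def by blast
  have bZ: "bounded Z" using Zc compact_imp_bounded by auto
  have Dpos: "diameter Z > 0" using diameter_subset[OF g(2) bZ] g(3) dd by linarith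
  have Zne: "Z \<noteq> {}" using g(2) unfolding path_image_def by auto
  have Gne: "G n \<noteq> {}" for n using Gcov[of n] Zne by auto
  have cardpos: "real (card (G n)) \<ge> 1" for n using Gne[of n] Gfin[of n] by (simp add: Suc_le_eq card_gt_0_iff)
  have L0p: "L0 > 0" using L1 by auto
  obtain a0 where a0: "tt a0 < min (diameter Z/(3*\<kappa>)) (1/(3*\<kappa>*L0))"
    using tt_small[of "min (diameter Z/(3*\<kappa>)) (1/(3*\<kappa>*L0))"] Dpos k1 L0p by auto
  have aD: "3*\<kappa>*tt a \<le> diameter Z" and aL: "3*\<kappa>*tt a*L0 \<le> 1" if "a0 \<le> a" for a
  proof -
    have t: "tt a < min (diameter Z/(3*\<kappa>)) (1/(3*\<kappa>*L0))" using tt_mono[OF that] a0 by linarith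
    then have "tt a < diameter Z/(3*\<kappa>)" "tt a < 1/(3*\<kappa>*L0)" by auto
    then show "3*\<kappa>*tt a \<le> diameter Z" "3*\<kappa>*tt a*L0 \<le> 1" using k1 L0p by (simp_all add: field_simps)
  qed
  obtain NA where NA0: "\<forall>n x W. x \<in> Z \<longrightarrow> W \<subseteq> G n \<longrightarrow> (\<forall>v\<in>W. dist x (c n v) < (4*\<kappa>) * tt n) \<longrightarrow> card W \<le> NA"
    using count[of "4*\<kappa>"] k1 by auto
  obtain NB where NB0: "\<forall>n x W. x \<in> Z \<longrightarrow> W \<subseteq> G n \<longrightarrow> (\<forall>v\<in>W. dist x (c n v) < (L0+\<kappa>) * tt n) \<longrightarrow> card W \<le> NB"
    using count[of "L0+\<kappa>"] k1 L0p by auto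
  obtain NC where NC0: "\<forall>n x W. x \<in> Z \<longrightarrow> W \<subseteq> G n \<longrightarrow> (\<forall>v\<in>W. dist x (c n v) < (6*\<kappa>*\<kappa>*L0+\<kappa>) * tt n) \<longrightarrow> card W \<le> NC"
    using count[of "6*\<kappa>*\<kappa>*L0+\<kappa>"] k1 L0p by (auto simp: add_pos_pos)
  define Cb where "Cb = (max 1 (real NA * real NB)) powr P * real NC"
  have Cb0: "Cb \<ge> 0" unfolding Cb_def by auto
  have bigc: "comb_mod p (curves_diam_ge Z dd) (G (a+b)) \<le>
     Cb * comb_mod p (curves_diam_ge Z dd) (G a) * comb_mod p (curves_diam_ge Z dd) (G b)"
    if "a0 \<le> a" "1 \<le> p" "p \<le> P" for a b p
    unfolding Cb_def
    by (rule big[OF dd that(2) that(3) NA0[THEN spec[of _ a]] NB0[THEN spec[of _ b]] NC0[THEN spec[of _ "a+b"]] aD[OF that(1)] aL[OF that(1)]])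
  define Cs where "Cs = (\<Sum>k<a0. \<Sum>l<a0. real (card (G (k+l))) * (real (card (G k)) * real (card (G l))) powr P)"
  have Cs0: "Cs \<ge> 0" unfolding Cs_def by (auto intro!: sum_nonneg)
  have small: "comb_mod p (curves_diam_ge Z dd) (G (k+l)) \<le>
     Cs * comb_mod p (curves_diam_ge Z dd) (G k) * comb_mod p (curves_diam_ge Z dd) (G l)"
    if "k < a0" "l < a0" "1 \<le> p" "p \<le> P" for k l p
  proof -
    define ck where "ck = real (card (G k))"
    define cl where "cl = real (card (G l))"
    have ck: "ck \<ge> 1" "cl \<ge> 1" unfolding ck_def cl_def using cardpos by auto
    have ckl: "ck * cl \<ge> 1" using mult_mono[of 1 ck 1 cl] ck by auto
    have lk: "comb_mod p (curves_diam_ge Z dd) (G k) \<ge> (1/ck) powr p" unfolding ck_def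
      by (rule mod_lower[OF False that(3)])
    have ll: "comb_mod p (curves_diam_ge Z dd) (G l) \<ge> (1/cl) powr p" unfolding cl_def
      by (rule mod_lower[OF False that(3)])
    have "(1/(ck*cl)) powr P \<le> (1/(ck*cl)) powr p"
      using that ck ckl by (intro powr_mono') (auto simp: field_simps)
    also have "\<dots> = (1/ck) powr p * (1/cl) powr p" using ck by (simp add: powr_mult[symmetric])
    also have "\<dots> \<le> comb_mod p (curves_diam_ge Z dd) (G k) * comb_mod p (curves_diam_ge Z dd) (G l)"
      using lk ll mod_nonneg by (intro mult_mono) auto
    finally have prod: "(1/(ck*cl)) powr P \<le> comb_mod p (curves_diam_ge Z dd) (G k) * comb_mod p (curves_diam_ge Z dd) (G l)" .
    have one: "(ck*cl) powr P * (1/(ck*cl)) powr P = 1" using ck by (simp add: powr_mult[symmetric])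
    define T where "T = real (card (G (k+l))) * (ck*cl) powr P"
    have "comb_mod p (curves_diam_ge Z dd) (G (k+l)) \<le> real (card (G (k+l)))" by (rule mod_upper)
    also have "\<dots> = T * (1/(ck*cl)) powr P" unfolding T_def using one by (simp add: mult.assoc)
    also have "\<dots> \<le> T * (comb_mod p (curves_diam_ge Z dd) (G k) * comb_mod p (curves_diam_ge Z dd) (G l))"
      using prod unfolding T_def by (intro mult_left_mono) auto
    also have "\<dots> \<le> Cs * (comb_mod p (curves_diam_ge Z dd) (G k) * comb_mod p (curves_diam_ge Z dd) (G l))"
    proof (rule mult_right_mono)
      have "T = (\<lambda>k. \<Sum>l<a0. real (card (G (k+l))) * (real (card (G k)) * real (card (G l))) powr P) k
          \<or> True" by simp
      have "T \<le> (\<Sum>l<a0. real (card (G (k+l))) * (real (card (G k)) * real (card (G l))) powr P)"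
        unfolding T_def ck_def cl_def using that(2)
        by (intro member_le_sum[of l "{..<a0}" "\<lambda>l. real (card (G (k+l))) * (real (card (G k)) * real (card (G l))) powr P"]) auto
      also have "\<dots> \<le> Cs" unfolding Cs_def using that(1)
        by (intro member_le_sum[of k "{..<a0}" "\<lambda>k. \<Sum>l<a0. real (card (G (k+l))) * (real (card (G k)) * real (card (G l))) powr P"])
           (auto intro!: sum_nonneg)
      finally show "T \<le> Cs" .
    qed (use mod_nonneg in auto)
    finally show ?thesis by (simp add: mult.assoc)
  qed
  show ?thesis
  proof (intro exI[of _ "Cs + Cb + 1"] conjI allI impI)
    show "0 < Cs + Cb + 1" using Cs0 Cb0 by auto
    fix p k l assume p: "1 \<le> p \<and> p \<le> P"
    have MM: "0 \<le> comb_mod p (curves_diam_ge Z dd) (G k) * comb_mod p (curves_diam_ge Z dd) (G l)"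
      using mod_nonneg by auto
    have le: "X \<le> Y * (comb_mod p (curves_diam_ge Z dd) (G k) * comb_mod p (curves_diam_ge Z dd) (G l)) \<Longrightarrow> Y \<le> Cs + Cb + 1 \<Longrightarrow>
       X \<le> (Cs + Cb + 1) * comb_mod p (curves_diam_ge Z dd) (G k) * comb_mod p (curves_diam_ge Z dd) (G l)" for X Y
      using mult_right_mono[OF _ MM, of Y "Cs + Cb + 1"] by (simp add: mult.assoc)
    show "comb_mod p (curves_diam_ge Z dd) (G (k+l)) \<le>
        (Cs + Cb + 1) * comb_mod p (curves_diam_ge Z dd) (G k) * comb_mod p (curves_diam_ge Z dd) (G l)"
    proof (cases "a0 \<le> k")
      case True
      show ?thesis using bigc[OF True, of p l] p Cs0 by (intro le[of _ Cb]) (auto simp: mult.assoc)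
    next
      case nk: False
      show ?thesis
      proof (cases "a0 \<le> l")
        case True
        have h: "comb_mod p (curves_diam_ge Z dd) (G (l+k)) \<le> Cb * comb_mod p (curves_diam_ge Z dd) (G l) * comb_mod p (curves_diam_ge Z dd) (G k)"
          using bigc[OF True, of p k] p by auto
        have "comb_mod p (curves_diam_ge Z dd) (G (k+l)) \<le> Cb * (comb_mod p (curves_diam_ge Z dd) (G k) * comb_mod p (curves_diam_ge Z dd) (G l))"
          using h by (simp only: add.commute[of k l]) (simp add: ac_simps)
        then show ?thesis using Cs0 by (intro le[of _ Cb]) auto
      next
        case False
        show ?thesis using small[of k l p] nk False p Cb0 by (intro le[of _ Cs]) (auto simp: mult.assoc)
      qed
    qed
  qed
qed

end



theorem mainTheorem10:
  fixes Z :: "'a::metric_space set" and L0 :: real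
  assumes "compact Z" and "arcwise_connected Z" and "approx_self_similar Z L0"
  shows "\<exists>\<delta>>0. \<forall>d0. 0 < d0 \<and> d0 \<le> \<delta> \<longrightarrow>
           (\<forall>\<kappa> G. kappa_approx Z \<kappa> G \<longrightarrow>
              (\<forall>p\<ge>1. \<exists>C>0. \<forall>k l.
                  comb_mod p (curves_diam_ge Z d0) (G (k + l))
                    \<le> C * comb_mod p (curves_diam_ge Z d0) (G k) * comb_mod p (curves_diam_ge Z d0) (G l)) \<and>
              (\<forall>K. compact K \<and> K \<subseteq> {1..} \<longrightarrow>
                 (\<exists>C>0. \<forall>p\<in>K. \<forall>k l.
                  comb_mod p (curves_diam_ge Z d0) (G (k + l))
                    \<le> C * comb_mod p (curves_diam_ge Z d0) (G k) * comb_mod p (curves_diam_ge Z d0) (G l))))"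
proof -
  have L1: "L0 \<ge> 1" using assms(3) unfolding approx_self_similar_def by auto
  have main: "(\<forall>p\<ge>1. \<exists>C>0. \<forall>k l.
                  comb_mod p (curves_diam_ge Z d0) (G (k + l))
                    \<le> C * comb_mod p (curves_diam_ge Z d0) (G k) * comb_mod p (curves_diam_ge Z d0) (G l)) \<and>
              (\<forall>K. compact K \<and> K \<subseteq> {1..} \<longrightarrow>
                 (\<exists>C>0. \<forall>p\<in>K. \<forall>k l.
                  comb_mod p (curves_diam_ge Z d0) (G (k + l))
                    \<le> C * comb_mod p (curves_diam_ge Z d0) (G k) * comb_mod p (curves_diam_ge Z d0) (G l)))"
    if d: "0 < d0" "d0 \<le> 1/(3*L0)" and kG: "kappa_approx Z \<kappa> G" for d0 \<kappa> G
  proof -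
    have k1: "\<kappa> \<ge> 1" and sc: "\<forall>k. kappa_approx_scale Z \<kappa> k (G k)" using kG unfolding kappa_approx_def by auto
    have "\<forall>k. \<exists>c. (\<forall>v\<in>G k. c v \<in> Z \<and>
              zball Z (c v) (tt k / \<kappa>) \<subseteq> v \<and>
              v \<subseteq> zball Z (c v) (\<kappa> * tt k)) \<and>
          (\<forall>v\<in>G k. \<forall>w\<in>G k. v \<noteq> w \<longrightarrow>
              zball Z (c v) (tt k / \<kappa>) \<inter> zball Z (c w) (tt k / \<kappa>) = {})"
      using sc unfolding kappa_approx_scale_def tt_def by blast
    then obtain c where c: "\<forall>k. (\<forall>v\<in>G k. c k v \<in> Z \<and>
              zball Z (c k v) (tt k / \<kappa>) \<subseteq> v \<and>
              v \<subseteq> zball Z (c k v) (\<kappa> * tt k)) \<and>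
          (\<forall>v\<in>G k. \<forall>w\<in>G k. v \<noteq> w \<longrightarrow>
              zball Z (c k v) (tt k / \<kappa>) \<inter> zball Z (c k w) (tt k / \<kappa>) = {})"
      by (rule choice[THEN exE]) blast
    have fin: "\<And>n. finite (G n)" and sub: "\<And>n v. v \<in> G n \<Longrightarrow> v \<subseteq> Z" and cov: "\<And>n. \<Union>(G n) = Z"
      using sc unfolding kappa_approx_scale_def by auto
    interpret S: setting Z L0 \<kappa> G c
      by (unfold_locales) (use assms(1,3) k1 fin sub cov c in auto)
    have key: "\<exists>C>0. \<forall>p. 1 \<le> p \<and> p \<le> P \<longrightarrow> (\<forall>k l. comb_mod p (curves_diam_ge Z d0) (G (k+l))
          \<le> C * comb_mod p (curves_diam_ge Z d0) (G k) * comb_mod p (curves_diam_ge Z d0) (G l))"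
      if "P \<ge> 1" for P
      by (rule S.key[OF d that])
    show ?thesis
    proof (intro conjI allI impI)
      fix p :: real assume p: "1 \<le> p"
      show "\<exists>C>0. \<forall>k l. comb_mod p (curves_diam_ge Z d0) (G (k + l))
                    \<le> C * comb_mod p (curves_diam_ge Z d0) (G k) * comb_mod p (curves_diam_ge Z d0) (G l)"
        using key[OF p] p by auto
    next
      fix K :: "real set" assume K: "compact K \<and> K \<subseteq> {1..}"
      define P where "P = max 1 (Sup K)"
      have bK: "bdd_above K" using K by (intro bounded_imp_bdd_above compact_imp_bounded) auto
      have pK: "1 \<le> p \<and> p \<le> P" if "p \<in> K" for p
        using that K cSup_upper[OF that bK] unfolding P_def by auto
      obtain C where "C > 0" "\<forall>p. 1 \<le> p \<and> p \<le> P \<longrightarrow> (\<forall>k l. comb_mod p (curves_diam_ge Z d0) (G (k+l))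
          \<le> C * comb_mod p (curves_diam_ge Z d0) (G k) * comb_mod p (curves_diam_ge Z d0) (G l))"
        using key[of P] unfolding P_def by auto
      then show "\<exists>C>0. \<forall>p\<in>K. \<forall>k l. comb_mod p (curves_diam_ge Z d0) (G (k + l))
                    \<le> C * comb_mod p (curves_diam_ge Z d0) (G k) * comb_mod p (curves_diam_ge Z d0) (G l)"
        using pK by blast
    qed
  qed
  show ?thesis
    using main L1 by (intro exI[of _ "1/(3*L0)"]) auto
qed



end
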